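(* Let $gl_n(\mathbb{C})$ be the Lie algebra of all $n\times n$ complex matrices with bracket $[x,y]=xy-yx$. A map $f:gl_n(\mathbb{C})\times gl_n(\mathbb{C})\to gl_n(\mathbb{C})$ is a biderivation of $gl_n(\mathbb{C})$ if and only if there are complex numbers $\lambda,\mu$ such that $f(x,y)=\mu\,\mathrm{tr}(x)\,\mathrm{tr}(y)\,I_n+\lambda[x,y]$ for all $x,y\in gl_n(\mathbb{C})$.
   Context: A biderivation of a Lie algebra $L$ is a bilinear map $f:L\times L\to L$ such that $f([x,y],z)=[x,f(y,z)]+[f(x,z),y]$ and $f(x,[y,z])=[f(x,y),z]+[y,f(x,z)]$ for all $x,y,z\in L$. $I_n$ is the identity matrix and $\mathrm{tr}$ the trace. *)

theory Defs
  imports "HOL-Analysis.Analysis"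
begin

text \<open>gl_n(C) is modelled as the type complex^'n^'n for an arbitrary finite index type 'n
  (so n = CARD('n) >= 1 arbitrary).\<close>

definition cscale :: "complex \<Rightarrow> complex^'n^'n \<Rightarrow> complex^'n^'n" where
  "cscale c A = (\<chi> i j. c * A $ i $ j)"

definition lie_bracket :: "complex^'n^'n \<Rightarrow> complex^'n^'n \<Rightarrow> complex^'n^'n" where
  "lie_bracket x y = x ** y - y ** x"

definition cbilinear :: "(complex^'n^'n \<Rightarrow> complex^'n^'n \<Rightarrow> complex^'n^'n) \<Rightarrow> bool" where
  "cbilinear f \<longleftrightarrow>
     (\<forall>x y z. f (x + y) z = f x z + f y z) \<and>
     (\<forall>x y z. f x (y + z) = f x y + f x z) \<and>
     (\<forall>c x y. f (cscale c x) y = cscale c (f x y)) \<and>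
     (\<forall>c x y. f x (cscale c y) = cscale c (f x y))"

definition biderivation :: "(complex^'n^'n \<Rightarrow> complex^'n^'n \<Rightarrow> complex^'n^'n) \<Rightarrow> bool" where
  "biderivation f \<longleftrightarrow> cbilinear f \<and>
     (\<forall>x y z. f (lie_bracket x y) z = lie_bracket x (f y z) + lie_bracket (f x z) y) \<and>
     (\<forall>x y z. f x (lie_bracket y z) = lie_bracket (f x y) z + lie_bracket y (f x z))"

end

theory Submission
  imports Defs
begin


type_synonym 'n cm = "complex^'n^'n"

definition unitm :: "'n::finite \<Rightarrow> 'n \<Rightarrow> complex^'n^'n" where
  "unitm a b = (\<chi> p q. if p = a \<and> q = b then 1 else 0)"

lemma unitm_nth[simp]: "unitm a b $ p $ q = (if p = a \<and> q = b then 1 else 0)"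
  by (simp add: unitm_def)

lemma cscale_nth[simp]: "cscale c A $ i $ j = c * A $ i $ j"
  by (simp add: cscale_def)

lemma mat1_nth[simp]: "(mat 1 :: complex^'n^'n) $ i $ j = (if i = j then 1 else 0)"
  by (simp add: mat_def)

lemma mult_unitm_right[simp]:
  "((M::complex^'n^'n) ** unitm a b) $ p $ q = (if q = b then M $ p $ a else 0)"
  by (simp add: matrix_matrix_mult_def if_distrib cong: if_cong)

lemma mult_unitm_left[simp]:
  "(unitm a b ** (M::complex^'n^'n)) $ p $ q = (if p = a then M $ b $ q else 0)"
  by (simp add: matrix_matrix_mult_def if_distrib if_distribR cong: if_cong)

lemma lie_nth: "lie_bracket x y $ p $ q = (x ** y) $ p $ q - (y ** x) $ p $ q"
  by (simp add: lie_bracket_def)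

lemma mm_add_l: "((A::complex^'n^'n) + B) ** C = A ** C + B ** C"
  by (simp add: vec_eq_iff matrix_matrix_mult_def sum.distrib distrib_right)
lemma mm_add_r: "(C::complex^'n^'n) ** (A + B) = C ** A + C ** B"
  by (simp add: vec_eq_iff matrix_matrix_mult_def sum.distrib distrib_left)
lemma mm_diff_l: "((A::complex^'n^'n) - B) ** C = A ** C - B ** C"
  by (simp add: vec_eq_iff matrix_matrix_mult_def sum_subtractf left_diff_distrib)
lemma mm_diff_r: "(C::complex^'n^'n) ** (A - B) = C ** A - C ** B"
  by (simp add: vec_eq_iff matrix_matrix_mult_def sum_subtractf right_diff_distrib)
lemma mm_cscale_l: "cscale c (A::complex^'n^'n) ** B = cscale c (A ** B)"
  by (simp add: vec_eq_iff matrix_matrix_mult_def sum_distrib_left mult.assoc)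
lemma mm_cscale_r: "(A::complex^'n^'n) ** cscale c B = cscale c (A ** B)"
  by (simp add: vec_eq_iff matrix_matrix_mult_def sum_distrib_left mult_ac)

lemma cscale_add: "cscale c ((A::complex^'n^'n) + B) = cscale c A + cscale c B"
  by (simp add: vec_eq_iff distrib_left)
lemma cscale_diff: "cscale c ((A::complex^'n^'n) - B) = cscale c A - cscale c B"
  by (simp add: vec_eq_iff right_diff_distrib)
lemma cscale_cscale: "cscale c (cscale d (A::complex^'n^'n)) = cscale (c*d) A"
  by (simp add: vec_eq_iff mult.assoc)
lemma cscale_0[simp]: "cscale 0 (A::complex^'n^'n) = 0"
  by (simp add: vec_eq_iff)
lemma cscale_zero[simp]: "cscale c (0::complex^'n^'n) = 0"
  by (simp add: vec_eq_iff)
lemma cscale_1[simp]: "cscale 1 (A::complex^'n^'n) = A"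
  by (simp add: vec_eq_iff)
lemma cscale_distrib: "cscale (c+d) (A::complex^'n^'n) = cscale c A + cscale d A"
  by (simp add: vec_eq_iff distrib_right)

lemma lie_add_l: "lie_bracket ((A::complex^'n^'n) + B) C = lie_bracket A C + lie_bracket B C"
  by (simp add: lie_bracket_def mm_add_l mm_add_r)
lemma lie_add_r: "lie_bracket C ((A::complex^'n^'n) + B) = lie_bracket C A + lie_bracket C B"
  by (simp add: lie_bracket_def mm_add_l mm_add_r)
lemma lie_diff_l: "lie_bracket ((A::complex^'n^'n) - B) C = lie_bracket A C - lie_bracket B C"
  by (simp add: lie_bracket_def mm_diff_l mm_diff_r)
lemma lie_diff_r: "lie_bracket C ((A::complex^'n^'n) - B) = lie_bracket C A - lie_bracket C B"
  by (simp add: lie_bracket_def mm_diff_l mm_diff_r)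
lemma lie_cscale_l: "lie_bracket (cscale c (A::complex^'n^'n)) B = cscale c (lie_bracket A B)"
  by (simp add: lie_bracket_def mm_cscale_l mm_cscale_r cscale_diff)
lemma lie_cscale_r: "lie_bracket A (cscale c (B::complex^'n^'n)) = cscale c (lie_bracket A B)"
  by (simp add: lie_bracket_def mm_cscale_l mm_cscale_r cscale_diff)
lemma lie_skew: "lie_bracket (A::complex^'n^'n) B = - lie_bracket B A"
  by (simp add: lie_bracket_def)
lemma lie_neg_l: "lie_bracket (- (A::complex^'n^'n)) B = - lie_bracket A B"
  by (simp add: lie_bracket_def vec_eq_iff matrix_matrix_mult_def sum_negf)
lemma lie_neg_r: "lie_bracket A (- (B::complex^'n^'n)) = - lie_bracket A B"
  by (simp add: lie_bracket_def vec_eq_iff matrix_matrix_mult_def sum_negf)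
lemma lie_zero_l[simp]: "lie_bracket 0 (A::complex^'n^'n) = 0"
  by (simp add: lie_bracket_def)
lemma lie_zero_r[simp]: "lie_bracket (A::complex^'n^'n) 0 = 0"
  by (simp add: lie_bracket_def)
lemma lie_scalar_r[simp]: "lie_bracket (A::complex^'n^'n) (cscale s (mat 1)) = 0"
  by (simp add: lie_bracket_def mm_cscale_l mm_cscale_r)
lemma lie_scalar_l[simp]: "lie_bracket (cscale s (mat 1)) (A::complex^'n^'n) = 0"
  by (simp add: lie_bracket_def mm_cscale_l mm_cscale_r)
lemma lie_mat1_r[simp]: "lie_bracket (A::complex^'n^'n) (mat 1) = 0"
  by (simp add: lie_bracket_def)
lemma lie_mat1_l[simp]: "lie_bracket (mat 1) (A::complex^'n^'n) = 0"
  by (simp add: lie_bracket_def)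
lemma jacobi: "lie_bracket (A::complex^'n^'n) (lie_bracket x y)
   = lie_bracket x (lie_bracket A y) + lie_bracket (lie_bracket A x) y"
  by (simp add: lie_bracket_def mm_diff_l mm_diff_r matrix_mul_assoc)

lemma trace_cscale: "trace (cscale c (A::complex^'n^'n)) = c * trace A"
  by (simp add: trace_def sum_distrib_left)
lemma trace_lie[simp]: "trace (lie_bracket (x::complex^'n^'n) y) = 0"
  unfolding lie_bracket_def trace_sub using trace_mul_sym[of x y] by simp
lemma trace_unitm: "trace (unitm a b) = (if a = b then 1 else 0)"
  by (auto simp: trace_def intro!: sum.neutral)
lemma trace_mat1: "trace (mat 1 :: complex^'n^'n) = of_nat CARD('n)"
  by (rule trace_I)

lemma inner_delta: "(\<Sum>xb\<in>UNIV. (x::complex^'n^'n) $ xa $ xb * (if i = xa \<and> j = xb then 1 else 0))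
      = (if i = xa then x $ xa $ j else 0)"
proof -
  have "(\<lambda>xb. x $ xa $ xb * (if i = xa \<and> j = xb then 1 else 0)) = (\<lambda>xb. if i = xa then (if xb = j then x $ xa $ j else 0) else 0)"
    by auto
  then show ?thesis by (simp only:) simp
qed

lemma decomp: "(x::complex^'n^'n) = (\<Sum>a\<in>UNIV. \<Sum>b\<in>UNIV. cscale (x$a$b) (unitm a b))"
  by (simp add: vec_eq_iff sum_component inner_delta)

definition clin :: "(complex^'n^'n \<Rightarrow> complex^'n^'n) \<Rightarrow> bool" where
  "clin L \<longleftrightarrow> (\<forall>x y. L (x + y) = L x + L y) \<and> (\<forall>c x. L (cscale c x) = cscale c (L x))"

lemma clin_add: "clin L \<Longrightarrow> L (x + y) = L x + L y"
  by (simp add: clin_def)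
lemma clin_cscale: "clin L \<Longrightarrow> L (cscale c x) = cscale c (L x)"
  by (simp add: clin_def)
lemma clin_0: "clin L \<Longrightarrow> L 0 = 0"
  using clin_add[of L 0 0] by simp
lemma clin_diff: "clin L \<Longrightarrow> L (x - y) = L x - L y"
  using clin_add[of L "x - y" y] by (simp add: algebra_simps)
lemma clin_sum: assumes "clin L" "finite S" shows "L (sum g S) = (\<Sum>i\<in>S. L (g i))"
  using assms(2) by (induction S rule: finite_induct) (simp_all add: clin_0[OF assms(1)] clin_add[OF assms(1)])
lemma clin_units:
  assumes "clin L1" "clin L2" "\<And>a b. L1 (unitm a b) = L2 (unitm a b)"
  shows "L1 x = L2 x"
proof -
  have "L1 x = L1 (\<Sum>a\<in>UNIV. \<Sum>b\<in>UNIV. cscale (x$a$b) (unitm a b))"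
    by (subst decomp[of x]) (rule refl)
  also have "\<dots> = (\<Sum>a\<in>UNIV. \<Sum>b\<in>UNIV. cscale (x$a$b) (L1 (unitm a b)))"
    using assms(1) by (simp add: clin_sum clin_cscale)
  also have "\<dots> = (\<Sum>a\<in>UNIV. \<Sum>b\<in>UNIV. cscale (x$a$b) (L2 (unitm a b)))"
    using assms(3) by simp
  also have "\<dots> = L2 (\<Sum>a\<in>UNIV. \<Sum>b\<in>UNIV. cscale (x$a$b) (unitm a b))"
    using assms(2) by (simp add: clin_sum clin_cscale)
  also have "\<dots> = L2 x"
    by (subst decomp[of x]) (rule refl)
  finally show ?thesis .
qed

lemma clin_zero: "clin (\<lambda>x. 0)"
  by (simp add: clin_def)



lemma DL:
  fixes D :: "complex^'n^'n \<Rightarrow> complex^'n^'n"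
  assumes lin: "clin D"
    and der: "\<And>x y. D (lie_bracket x y) = lie_bracket x (D y) + lie_bracket (D x) y"
  shows "\<exists>A c. \<forall>x. D x = lie_bracket A x + cscale (c * trace x) (mat 1)"
proof -
  obtain r :: 'n where True by simp
  define c where "c = D (unitm r r) $ r $ r"
  define A :: "complex^'n^'n" where
    "A = (\<chi> p a. D (unitm a r) $ p $ r - (if a = r \<and> p = r then c else 0))"
  have Ann: "A $ p $ a = D (unitm a r) $ p $ r - (if a = r \<and> p = r then c else 0)" for p a
    by (simp add: A_def)
  define N where "N x = D x - lie_bracket A x - cscale (c * trace x) (mat 1)" for x
  have Nlin: "clin N"
    unfolding clin_def N_def
    by (simp add: clin_add[OF lin] clin_cscale[OF lin] lie_add_r lie_cscale_r trace_add
        trace_cscale distrib_left cscale_distrib cscale_diff cscale_add cscale_cscale mult_ac algebra_simps)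
  have Nder: "N (lie_bracket x y) = lie_bracket x (N y) + lie_bracket (N x) y" for x y
    unfolding N_def
    by (simp add: der lie_diff_l lie_diff_r jacobi[of A x y] lie_add_l lie_add_r algebra_simps)
  have F1: "N (unitm a r) $ p $ r = 0" for a p
    by (simp add: N_def lie_nth Ann trace_unitm c_def)
  have F2: "N (unitm r r) = 0"
  proof -
    have "N (unitm r r) $ p $ q = 0" for p q
    proof (cases "q = r")
      case True then show ?thesis using F1 by simp
    next
      case False
      have e: "lie_bracket (unitm q r) (unitm r r) = unitm q r"
        using False by (simp add: vec_eq_iff lie_nth)
      have "N (unitm q r) $ p $ r = (lie_bracket (unitm q r) (N (unitm r r))
              + lie_bracket (N (unitm q r)) (unitm r r)) $ p $ r"
        using Nder[of "unitm q r" "unitm r r"] e by simp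
      then show ?thesis using F1[of q p] F1[of r r] F1[of q r]
        by (auto simp: lie_nth split: if_splits)
    qed
    then show ?thesis by (simp add: vec_eq_iff)
  qed
  have F3: "N (unitm a r) = 0" for a
  proof (cases "a = r")
    case True then show ?thesis using F2 by simp
  next
    case False
    have e: "lie_bracket (unitm a r) (unitm r r) = unitm a r"
      using False by (simp add: vec_eq_iff lie_nth)
    have eq: "N (unitm a r) = lie_bracket (N (unitm a r)) (unitm r r)"
      using Nder[of "unitm a r" "unitm r r"] e F2 by simp
    have "N (unitm a r) $ p $ q = 0" for p q
    proof -
      have "N (unitm a r) $ p $ q = lie_bracket (N (unitm a r)) (unitm r r) $ p $ q"
        using eq by simp
      moreover have "N (unitm a r) $ r $ q = lie_bracket (N (unitm a r)) (unitm r r) $ r $ q"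
        using eq by simp
      ultimately show ?thesis using F1[of a p] F1[of a r]
        by (auto simp: lie_nth split: if_splits)
    qed
    then show ?thesis by (simp add: vec_eq_iff)
  qed
  have F4: "N (unitm r b) = 0" for b
  proof (cases "b = r")
    case True then show ?thesis using F2 by simp
  next
    case False
    define X where "X = N (unitm r b)"
    have e: "lie_bracket (unitm r r) (unitm r b) = unitm r b"
      using False by (simp add: vec_eq_iff lie_nth)
    have eq: "X = lie_bracket (unitm r r) X"
      using Nder[of "unitm r r" "unitm r b"] e F2 by (simp add: X_def)
    have X1: "X $ p $ q = 0" if "p \<noteq> r" for p q
    proof -
      have a1: "X $ p $ q = lie_bracket (unitm r r) X $ p $ q" using eq by simp
      have a2: "X $ p $ r = lie_bracket (unitm r r) X $ p $ r" using eq by simp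
      show ?thesis using a1 a2 that by (auto simp: lie_nth split: if_splits)
    qed
    have Xrr: "X $ r $ r = 0"
    proof -
      have "X $ r $ r = lie_bracket (unitm r r) X $ r $ r" using eq by simp
      then show ?thesis by (simp add: lie_nth)
    qed
    have key: "(if b = q then X $ r $ b else 0) + X $ r $ q = 0" if "q \<noteq> r" for q
    proof -
      have e1: "lie_bracket (unitm q b) (unitm b r) = unitm q r"
        using that by (auto simp: vec_eq_iff lie_nth)
      have z1: "lie_bracket (N (unitm q b)) (unitm b r) = 0"
        using Nder[of "unitm q b" "unitm b r"] e1 F3[of q] F3[of b] by simp
      have e2: "lie_bracket (unitm r b) (unitm q r) = (if b = q then unitm r r else 0) - unitm q b"
        using that by (auto simp: vec_eq_iff lie_nth)
      have "N (lie_bracket (unitm r b) (unitm q r)) = lie_bracket X (unitm q r)"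
        using Nder[of "unitm r b" "unitm q r"] F3[of q] by (simp add: X_def)
      moreover have "N (lie_bracket (unitm r b) (unitm q r)) = - N (unitm q b)"
        unfolding e2 clin_diff[OF Nlin] using F2 clin_0[OF Nlin] by simp
      ultimately have "N (unitm q b) = - lie_bracket X (unitm q r)" by (metis minus_minus)
      then have "lie_bracket (lie_bracket X (unitm q r)) (unitm b r) = 0"
        using z1 by (simp add: lie_neg_l)
      then have "lie_bracket (lie_bracket X (unitm q r)) (unitm b r) $ b $ r = 0" by simp
      then show ?thesis using that False by (auto simp: lie_nth algebra_simps split: if_splits)
    qed
    have Xrb: "X $ r $ b = 0" using key[of b] False by simp
    have "X $ p $ q = 0" for p q
    proof (cases "p = r")
      case False then show ?thesis using X1 by simp
    next
      case True
      show ?thesis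
      proof (cases "q = r")
        case True then show ?thesis using Xrr \<open>p = r\<close> by simp
      next
        case qr: False
        show ?thesis
        proof (cases "q = b")
          case True then show ?thesis using Xrb \<open>p = r\<close> by simp
        next
          case False then show ?thesis using key[OF qr] \<open>p = r\<close> by simp
        qed
      qed
    qed
    then show ?thesis by (simp add: vec_eq_iff X_def)
  qed
  have F5: "N (unitm a b) = 0" for a b
  proof (cases "a = r")
    case True then show ?thesis using F4 by simp
  next
    case False
    have e: "lie_bracket (unitm r b) (unitm a r) = (if b = a then unitm r r else 0) - unitm a b"
      using False by (auto simp: vec_eq_iff lie_nth)
    have "N (lie_bracket (unitm r b) (unitm a r)) = 0"
      using Nder[of "unitm r b" "unitm a r"] F3 F4 by simp
    moreover have "N (lie_bracket (unitm r b) (unitm a r)) = - N (unitm a b)"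
      unfolding e clin_diff[OF Nlin] using F2 clin_0[OF Nlin] by simp
    ultimately show ?thesis by simp
  qed
  have "N x = 0" for x
    using clin_units[OF Nlin clin_zero] F5 by blast
  then have "D x = lie_bracket A x + cscale (c * trace x) (mat 1)" for x
    using N_def[of x] by (simp add: algebra_simps)
  then show ?thesis by blast
qed



lemma jac_l: "lie_bracket (lie_bracket (x::complex^'n^'n) y) z
   = lie_bracket x (lie_bracket y z) + lie_bracket (lie_bracket x z) y"
  by (simp add: lie_bracket_def mm_diff_l mm_diff_r matrix_mul_assoc)

lemma trace_scalar: "trace (cscale s (mat 1) :: complex^'n^'n) = s * of_nat CARD('n)"
  by (simp add: trace_cscale trace_mat1)

lemma trace_mult_unitm: "trace ((M::complex^'n^'n) ** unitm q p) = M $ p $ q"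
  by (simp add: trace_def)

lemma reverse_dir:
  fixes lam mu :: complex
  shows "biderivation (\<lambda>x y. cscale (mu * trace x * trace y) (mat 1) + cscale lam (lie_bracket x y)
     :: complex^'n^'n)"
proof -
  define F :: "complex^'n^'n \<Rightarrow> complex^'n^'n \<Rightarrow> complex^'n^'n" where
    "F x y = cscale (mu * trace x * trace y) (mat 1) + cscale lam (lie_bracket x y)" for x y
  have a1: "F (x + y) z = F x z + F y z" for x y z
    unfolding F_def by (simp add: trace_add distrib_left distrib_right cscale_distrib cscale_add lie_add_l)
  have a2: "F x (y + z) = F x y + F x z" for x y z
    unfolding F_def by (simp add: trace_add distrib_left distrib_right cscale_distrib cscale_add lie_add_r)
  have a3: "F (cscale c x) y = cscale c (F x y)" for c x y
    unfolding F_def by (simp add: trace_cscale cscale_add lie_cscale_l cscale_cscale mult_ac)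
  have a4: "F x (cscale c y) = cscale c (F x y)" for c x y
    unfolding F_def by (simp add: trace_cscale cscale_add lie_cscale_r cscale_cscale mult_ac)
  have b1: "F (lie_bracket x y) z = lie_bracket x (F y z) + lie_bracket (F x z) y" for x y z
    unfolding F_def by (simp add: lie_add_l lie_add_r lie_cscale_l lie_cscale_r jac_l[of x y z] cscale_add)
  have b2: "F x (lie_bracket y z) = lie_bracket (F x y) z + lie_bracket y (F x z)" for x y z
    unfolding F_def by (simp add: lie_add_l lie_add_r lie_cscale_l lie_cscale_r jacobi[of x y z] cscale_add add.commute)
  have "biderivation F"
    unfolding biderivation_def cbilinear_def using a1 a2 a3 a4 b1 b2 by blast
  then show ?thesis unfolding F_def[abs_def] .
qed

lemma lie_trivial:
  assumes "\<forall>p q::'n. p = q"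
  shows "lie_bracket (u::complex^'n^'n) v = 0"
proof -
  obtain t :: 'n where True by simp
  have U: "(UNIV::'n set) = {t}" using assms by auto
  have "lie_bracket u v $ i $ j = 0" for i j
    using assms[rule_format, of i t] assms[rule_format, of j t]
    by (simp add: lie_nth matrix_matrix_mult_def U)
  then show ?thesis by (simp add: vec_eq_iff)
qed

lemma forward:
  fixes f :: "complex^'n^'n \<Rightarrow> complex^'n^'n \<Rightarrow> complex^'n^'n"
  assumes bd: "biderivation f"
  shows "\<exists>lam mu :: complex. \<forall>x y.
       f x y = cscale (mu * trace x * trace y) (mat 1) + cscale lam (lie_bracket x y)"
proof -
  have addL: "f (x + y) z = f x z + f y z" for x y z
    using bd by (simp add: biderivation_def cbilinear_def)
  have addR: "f x (y + z) = f x y + f x z" for x y z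
    using bd by (simp add: biderivation_def cbilinear_def)
  have scL: "f (cscale c x) y = cscale c (f x y)" for c x y
    using bd by (simp add: biderivation_def cbilinear_def)
  have scR: "f x (cscale c y) = cscale c (f x y)" for c x y
    using bd by (simp add: biderivation_def cbilinear_def)
  have d1: "f (lie_bracket x y) z = lie_bracket x (f y z) + lie_bracket (f x z) y" for x y z
    using bd by (simp add: biderivation_def)
  have d2: "f x (lie_bracket y z) = lie_bracket (f x y) z + lie_bracket y (f x z)" for x y z
    using bd by (simp add: biderivation_def)
  have "\<forall>z. \<exists>A c. \<forall>x. f x z = lie_bracket A x + cscale (c * trace x) (mat 1)"
  proof
    fix z
    show "\<exists>A c. \<forall>x. f x z = lie_bracket A x + cscale (c * trace x) (mat 1)"
      by (rule DL[of "\<lambda>x. f x z"]) (simp_all add: clin_def addL scL d1)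
  qed
  then obtain A1 c1 where h1: "\<And>x z. f x z = lie_bracket (A1 z) x + cscale (c1 z * trace x) (mat 1)"
    by metis
  have "\<forall>x. \<exists>A c. \<forall>y. f x y = lie_bracket A y + cscale (c * trace y) (mat 1)"
  proof
    fix x
    show "\<exists>A c. \<forall>y. f x y = lie_bracket A y + cscale (c * trace y) (mat 1)"
      by (rule DL[of "f x"]) (simp_all add: clin_def addR scR d2 add.commute)
  qed
  then obtain B c2 where h2: "\<And>x y. f x y = lie_bracket (B x) y + cscale (c2 x * trace y) (mat 1)"
    by metis
  define nn where "nn = (of_nat CARD('n) :: complex)"
  have nn0: "nn \<noteq> 0" by (simp add: nn_def)
  have trI: "trace (mat 1 :: complex^'n^'n) = nn" by (simp add: nn_def trace_mat1)
  have tr: "c1 y * trace x = c2 x * trace y" for x y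
  proof -
    have "trace (f x y) = c1 y * trace x * nn"
      by (subst h1) (simp add: trace_add trace_scalar nn_def)
    moreover have "trace (f x y) = c2 x * trace y * nn"
      by (subst h2) (simp add: trace_add trace_scalar nn_def)
    ultimately show ?thesis using nn0 by simp
  qed
  define mu where "mu = c2 (mat 1) / nn"
  have c1: "c1 y = mu * trace y" for y
    using tr[where x="mat 1" and y=y] nn0 by (simp add: trI mu_def field_simps)
  have c2: "c2 x = mu * trace x" for x
    using tr[where x=x and y="mat 1"] nn0 c1[of "mat 1"] by (simp add: trI field_simps)
  define g where "g x y = lie_bracket (B x) y" for x y
  have fg: "f x y = g x y + cscale (mu * trace x * trace y) (mat 1)" for x y
    using h2[of x y] by (simp add: g_def c2 mult_ac)
  have gA: "g x y = lie_bracket (A1 y) x" for x y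
    using h1[of x y] h2[of x y] tr[of y x] by (simp add: g_def)
  have gdef2: "g x y = f x y - cscale (mu * trace x * trace y) (mat 1)" for x y
    using fg[of x y] by simp
  have gaddL: "g (x + x') y = g x y + g x' y" for x x' y
    unfolding gdef2 by (simp add: addL trace_add distrib_left distrib_right cscale_distrib algebra_simps)
  have gaddR: "g x (y + y') = g x y + g x y'" for x y y'
    unfolding gdef2 by (simp add: addR trace_add distrib_left distrib_right cscale_distrib algebra_simps)
  have gscL: "g (cscale c x) y = cscale c (g x y)" for c x y
    unfolding gdef2 by (simp add: scL trace_cscale cscale_diff cscale_cscale mult_ac)
  have trid: "trace (lie_bracket x (B x) ** y) = trace (g x y ** x)" for x y
  proof -
    have a: "trace ((x ** B x) ** y) = trace ((B x ** y) ** x)"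
      by (metis matrix_mul_assoc trace_mul_sym)
    have b: "trace ((B x ** x) ** y) = trace ((y ** B x) ** x)"
      by (metis matrix_mul_assoc trace_mul_sym)
    show ?thesis unfolding g_def lie_bracket_def
      by (simp add: mm_diff_l trace_sub a b)
  qed
  have trz: "trace (g x y ** x) = 0" for x y
  proof -
    have a: "trace ((x ** A1 y) ** x) = trace ((A1 y ** x) ** x)"
      by (metis matrix_mul_assoc trace_mul_sym)
    show ?thesis unfolding gA lie_bracket_def
      by (simp add: mm_diff_l trace_sub a)
  qed
  have comm: "g x x = 0" for x
  proof -
    have "lie_bracket x (B x) $ p $ q = 0" for p q
      using trid[of x "unitm q p"] trz[of x "unitm q p"] by (simp add: trace_mult_unitm)
    then have "lie_bracket x (B x) = 0" by (simp add: vec_eq_iff)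
    then show ?thesis by (simp add: g_def lie_skew[of "B x"])
  qed
  have skew: "g x y = - g y x" for x y
  proof -
    have "0 = g (x + y) (x + y)" using comm by simp
    also have "\<dots> = g x x + g x y + (g y x + g y y)" by (simp add: gaddL gaddR)
    finally show ?thesis using comm[of x] comm[of y] by (simp add: eq_neg_iff_add_eq_0 add.commute)
  qed
  show ?thesis
  proof (cases "\<exists>r s::'n. r \<noteq> s")
    case False
    then have allq: "\<forall>p q::'n. p = q" by blast
    have "f x y = cscale (mu * trace x * trace y) (mat 1) + cscale 0 (lie_bracket x y)" for x y
      using fg[of x y] lie_trivial[OF allq] by (simp add: g_def)
    then show ?thesis by blast
  next
    case True
    then obtain r s :: 'n where rs: "r \<noteq> s" by blast
    have other: "\<exists>l. l \<noteq> b" for b :: 'n using rs by metis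
    define P where "P a b = B (unitm a b)" for a b
    have EQ: "lie_bracket (P a b) (unitm k l) = - lie_bracket (P k l) (unitm a b)" for a b k l
      using skew[of "unitm a b" "unitm k l"] by (simp add: g_def P_def)
    have E: "(if q = l then P a b $ p $ k else 0) - (if p = k then P a b $ l $ q else 0)
          = - ((if q = b then P k l $ p $ a else 0) - (if p = a then P k l $ b $ q else 0))"
      for a b k l p q
      using arg_cong[OF EQ[of a b k l], of "\<lambda>M. M $ p $ q"] by (simp add: lie_nth)
    have O1: "P a b $ p $ k = 0" if "p \<noteq> k" "p \<noteq> a" for a b p k
    proof -
      obtain l where "l \<noteq> b" using other by blast
      then show ?thesis using E[where a=a and b=b and k=k and l=l and p=p and q=l] that by simp
    qed
    have O2: "P a b $ a $ k = 0" if "k \<noteq> a" "k \<noteq> b" for a b k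
    proof -
      obtain l where l: "l \<noteq> b" using other by blast
      have "P k l $ b $ l = 0" using O1[where a=k and b=l and p=b and k=l] l that by simp
      then show ?thesis using E[where a=a and b=b and k=k and l=l and p=a and q=l] that l by simp
    qed
    define \<alpha> where "\<alpha> a b = P a b $ a $ b" for a b
    have SA: "\<alpha> a b = \<alpha> b l" if "a \<noteq> b" "l \<noteq> b" for a b l
      using E[where a=a and b=b and k=b and l=l and p=a and q=l] that by (simp add: \<alpha>_def)
    define lam where "lam = \<alpha> r s"
    have base: "\<alpha> x s = lam" if "x \<noteq> s" for x
      using SA[of x s r] SA[of r s r] that rs by (simp add: lam_def)
    have SL: "\<alpha> a b = lam" if "a \<noteq> b" for a b
    proof (cases "b = s")
      case True then show ?thesis using base that by simp
    next
      case False then show ?thesis using SA[of a b s] base[of b] that by simp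
    qed
    have Off: "P a b $ p $ q = (if p = a \<and> q = b then lam else 0)" if "p \<noteq> q" for a b p q
    proof (cases "p = a")
      case False then show ?thesis using O1[where a=a and b=b and p=p and k=q] that by simp
    next
      case True
      show ?thesis
      proof (cases "q = b")
        case True then show ?thesis using SL[of a b] \<open>p = a\<close> that by (simp add: \<alpha>_def)
      next
        case False then show ?thesis using O2[where a=a and b=b and k=q] \<open>p = a\<close> that by simp
      qed
    qed
    have Dg: "P a b $ k $ k - P a b $ l $ l
        = lam * ((if a = k \<and> b = k then 1 else 0) - (if a = l \<and> b = l then 1 else 0))"
      if kl: "k \<noteq> l" for a b k l
    proof (cases "k = a \<and> l = b")
      case True
      then show ?thesis using E[where a=a and b=b and k=k and l=l and p=k and q=l] kl by (simp add: algebra_simps)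
    next
      case False
      have e: "P a b $ k $ k - P a b $ l $ l
          = - ((if l = b then P k l $ k $ a else 0) - (if k = a then P k l $ b $ l else 0))"
        using E[where a=a and b=b and k=k and l=l and p=k and q=l] by simp
      show ?thesis
      proof (cases "l = b")
        case True
        then have "k \<noteq> a" using False by blast
        then show ?thesis using e Off[where a=k and b=l and p=k and q=a] True kl by auto
      next
        case lb: False
        show ?thesis
        proof (cases "k = a")
          case True then show ?thesis using e Off[where a=k and b=l and p=b and q=l] lb kl by auto
        next
          case False then show ?thesis using e lb kl by auto
        qed
      qed
    qed
    have Struct: "P a b = cscale lam (unitm a b)
        + cscale (P a b $ r $ r - lam * (if a = r \<and> b = r then 1 else 0)) (mat 1)" for a b
    proof -
      define tau where "tau = P a b $ r $ r - lam * (if a = r \<and> b = r then 1 else 0)"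
      have ent: "P a b $ p $ q = lam * (if p = a \<and> q = b then 1 else 0)
          + tau * (if p = q then 1 else 0)"
        for p q
      proof (cases "p = q")
        case False then show ?thesis using Off[OF False] by (simp add: tau_def)
      next
        case True
        show ?thesis
        proof (cases "p = r")
          case True then show ?thesis using \<open>p = q\<close> by (force simp: tau_def)
        next
          case False
          have d: "P a b $ p $ p = P a b $ r $ r
              + lam * ((if a = p \<and> b = p then 1 else 0) - (if a = r \<and> b = r then 1 else 0))"
            using Dg[where a=a and b=b and k=p and l=r, OF False] unfolding diff_eq_eq
            by (simp only: add.commute)
          show ?thesis unfolding \<open>p = q\<close>[symmetric] d tau_def
            by (cases "a = p \<and> b = p"; cases "a = r \<and> b = r"; simp add: right_diff_distrib; blast)
        qed
      qed
      have "P a b = cscale lam (unitm a b) + cscale tau (mat 1)"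
        by (simp add: vec_eq_iff ent)
      then show ?thesis unfolding tau_def .
    qed
    have gunit: "g (unitm a b) y = cscale lam (lie_bracket (unitm a b) y)" for a b y
      unfolding g_def P_def[symmetric] by (subst Struct) (simp add: lie_add_l lie_cscale_l)
    have gall: "g x y = cscale lam (lie_bracket x y)" for x y
    proof -
      have "clin (\<lambda>x. g x y)" by (simp add: clin_def gaddL gscL)
      moreover have "clin (\<lambda>x. cscale lam (lie_bracket x y))"
        by (simp add: clin_def lie_add_l lie_cscale_l cscale_add cscale_cscale mult.commute)
      ultimately show ?thesis using clin_units[of "\<lambda>x. g x y" "\<lambda>x. cscale lam (lie_bracket x y)"] gunit
        by blast
    qed
    have "f x y = cscale (mu * trace x * trace y) (mat 1) + cscale lam (lie_bracket x y)" for x y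
      using fg[of x y] gall[of x y] by (simp add: add.commute)
    then show ?thesis by blast
  qed
qed


theorem theorem3p2:
  fixes f :: "complex^'n^'n \<Rightarrow> complex^'n^'n \<Rightarrow> complex^'n^'n"
  shows "biderivation f \<longleftrightarrow>
    (\<exists>lam mu :: complex. \<forall>x y.
       f x y = cscale (mu * trace x * trace y) (mat 1) + cscale lam (lie_bracket x y))"
proof
  assume "biderivation f"
  then show "\<exists>lam mu :: complex. \<forall>x y.
       f x y = cscale (mu * trace x * trace y) (mat 1) + cscale lam (lie_bracket x y)"
    by (rule forward)
next
  assume "\<exists>lam mu :: complex. \<forall>x y.
       f x y = cscale (mu * trace x * trace y) (mat 1) + cscale lam (lie_bracket x y)"
  then obtain lam mu :: complex where h: "\<And>x y.
       f x y = cscale (mu * trace x * trace y) (mat 1) + cscale lam (lie_bracket x y)" by blast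
  have "f = (\<lambda>x y. cscale (mu * trace x * trace y) (mat 1) + cscale lam (lie_bracket x y))"
    using h by (intro ext) simp
  then show "biderivation f" using reverse_dir by simp
qed

end
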